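(* Let $P=(p_1,p_2,p_3,p_4)$ be four points in general position in $\mathbb{R}^2$, let $f=(f_{ij})_{1\le i<j\le4}$ be arbitrary reals, let $w_{ij}=1/(\det(p_i,p_j,p_k)\det(p_i,p_j,p_l))$ with $\{k,l\}=\{1,2,3,4\}\setminus\{i,j\}$, and put $R=\sum_{1\le i<j\le4}w_{ij}f_{ij}$. For a pair $kl$, let $G_{kl}$ be the complete graph on $P$ minus the edge $kl$. Then there exists $v\in\bar X_f(P)$ with $E(v)=G_{kl}$ (and then $v$ is a vertex of $\bar X_f(P)$) if and only if $R$ and $w_{kl}$ have opposite signs (i.e. $R\,w_{kl}<0$).
   Context: $\det(q_0,q_1,q_2)$ is the determinant of the $3\times3$ matrix with columns $(q_0,1),(q_1,1),(q_2,1)$; general position: no three points collinear. Infinitesimal motions $v\in(\mathbb{R}^2)^4$ are normalized by $v_1^1=v_1^2=v_2^1=0$ (with $p_1,p_2$ having different $y$-coordinates). $\bar X_f(P)$ is the set of normalized $v$ with $\langle p_i-p_j,v_i-v_j\rangle\ge f_{ij}$ for all $i<j$; $E(v)$ is the set of pairs $ij$ with $\langle p_i-p_j,v_i-v_j\rangle=f_{ij}$. *)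

theory Defs
  imports "HOL-Analysis.Analysis"
begin

text \<open>Configurations of four points in the plane are elements of (real \<times> real)^4;
  the four indices are the elements 1, 2, 3, 4 of the numeral type 4.
  Infinitesimal motions v live in the same space.\<close>

text \<open>det(q0,q1,q2): determinant of the 3x3 matrix with columns (q0,1),(q1,1),(q2,1).\<close>
definition det3 :: "real \<times> real \<Rightarrow> real \<times> real \<Rightarrow> real \<times> real \<Rightarrow> real" where
  "det3 q0 q1 q2 =
     fst q0 * snd q1 + fst q1 * snd q2 + fst q2 * snd q0
   - fst q2 * snd q1 - fst q0 * snd q2 - fst q1 * snd q0"

definition gen_pos :: "(real \<times> real)^4 \<Rightarrow> bool" where
  "gen_pos p \<longleftrightarrow> (\<forall>i j k. distinct [i, j, k] \<longrightarrow> det3 (p$i) (p$j) (p$k) \<noteq> 0)"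

definition pairs4 :: "(4 \<times> 4) set" where
  "pairs4 = {(1,2), (1,3), (1,4), (2,3), (2,4), (3,4)}"

definition wgt :: "(real \<times> real)^4 \<Rightarrow> 4 \<Rightarrow> 4 \<Rightarrow> real" where
  "wgt p i j = 1 / (\<Prod>k\<in>UNIV - {i, j}. det3 (p$i) (p$j) (p$k))"

definition Rsum :: "(4 \<Rightarrow> 4 \<Rightarrow> real) \<Rightarrow> (real \<times> real)^4 \<Rightarrow> real" where
  "Rsum f p = (\<Sum>(i,j)\<in>pairs4. wgt p i j * f i j)"

definition normalized :: "(real \<times> real)^4 \<Rightarrow> bool" where
  "normalized v \<longleftrightarrow> fst (v$1) = 0 \<and> snd (v$1) = 0 \<and> fst (v$2) = 0"

definition edge_val :: "(real \<times> real)^4 \<Rightarrow> (real \<times> real)^4 \<Rightarrow> 4 \<Rightarrow> 4 \<Rightarrow> real" where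
  "edge_val p v i j = (p$i - p$j) \<bullet> (v$i - v$j)"

definition Xbar :: "(4 \<Rightarrow> 4 \<Rightarrow> real) \<Rightarrow> (real \<times> real)^4 \<Rightarrow> ((real \<times> real)^4) set" where
  "Xbar f p = {v. normalized v \<and> (\<forall>(i,j)\<in>pairs4. edge_val p v i j \<ge> f i j)}"

definition Eset :: "(4 \<Rightarrow> 4 \<Rightarrow> real) \<Rightarrow> (real \<times> real)^4 \<Rightarrow> (real \<times> real)^4 \<Rightarrow> (4 \<times> 4) set" where
  "Eset f p v = {(i,j)\<in>pairs4. edge_val p v i j = f i j}"

end

theory Submission
  imports Defs
begin

lemma sum_pairs4: "(\<Sum>(i,j)\<in>pairs4. g i j) = g 1 2 + g 1 3 + g 1 4 + g 2 3 + g 2 4 + (g 3 4::real)"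
  unfolding pairs4_def by simp

lemma ev: "edge_val p v i j = (fst(p$i)-fst(p$j))*(fst(v$i)-fst(v$j)) + (snd(p$i)-snd(p$j))*(snd(v$i)-snd(v$j))"
  unfolding edge_val_def by (simp add: inner_prod_def)

lemma ev_lin: "edge_val p (c *\<^sub>R a + d *\<^sub>R b) i j = c * edge_val p a i j + d * edge_val p b i j"
  unfolding ev by (simp add: algebra_simps)

lemma stress_poly:
  fixes x1 x2 x3 x4 y1 y2 y3 y4 a1 a2 a3 a4 b1 b2 b3 b4 :: real
  defines "e \<equiv> \<lambda>xi yi xj yj ai bi aj bj. (xi-xj)*(ai-aj)+(yi-yj)*(bi-bj)"
  defines "T1 \<equiv> det3 (x2,y2) (x3,y3) (x4,y4)" and "T2 \<equiv> det3 (x1,y1) (x3,y3) (x4,y4)"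
      and "T3 \<equiv> det3 (x1,y1) (x2,y2) (x4,y4)" and "T4 \<equiv> det3 (x1,y1) (x2,y2) (x3,y3)"
  shows "e x1 y1 x2 y2 a1 b1 a2 b2 * T1*T2 - e x1 y1 x3 y3 a1 b1 a3 b3 * T1*T3
   + e x1 y1 x4 y4 a1 b1 a4 b4 * T1*T4 + e x2 y2 x3 y3 a2 b2 a3 b3 * T2*T3
   - e x2 y2 x4 y4 a2 b2 a4 b4 * T2*T4 + e x3 y3 x4 y4 a3 b3 a4 b4 * T3*T4 = 0"
  unfolding e_def T1_def T2_def T3_def T4_def det3_def by simp algebra

lemma det3_perm:
  "det3 a c b = - det3 a b c" "det3 b a c = - det3 a b c" "det3 b c a = det3 a b c"
  "det3 c a b = det3 a b c" "det3 c b a = - det3 a b c"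
  unfolding det3_def by algebra+

context
  fixes p :: "(real \<times> real)^4"
  assumes gp: "gen_pos p"
begin

definition "T1 = det3 (p$2) (p$3) (p$4)"
definition "T2 = det3 (p$1) (p$3) (p$4)"
definition "T3 = det3 (p$1) (p$2) (p$4)"
definition "T4 = det3 (p$1) (p$2) (p$3)"

lemma Tnz: "T1 \<noteq> 0" "T2 \<noteq> 0" "T3 \<noteq> 0" "T4 \<noteq> 0"
proof -
  have d: "distinct [2,3,4::4]" "distinct [1,3,4::4]" "distinct [1,2,4::4]" "distinct [1,2,3::4]" by simp_all
  show "T1 \<noteq> 0" "T2 \<noteq> 0" "T3 \<noteq> 0" "T4 \<noteq> 0"
    using gp d unfolding gen_pos_def T1_def T2_def T3_def T4_def by blast+
qed


lemma wgt_vals: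
  "wgt p 1 2 = 1/(T4*T3)" "wgt p 1 3 = -1/(T4*T2)" "wgt p 1 4 = 1/(T3*T2)"
  "wgt p 2 3 = 1/(T4*T1)" "wgt p 2 4 = -1/(T3*T1)" "wgt p 3 4 = 1/(T2*T1)"
proof -
  have e: "det3 (p$1) (p$3) (p$2) = - T4" "det3 (p$1) (p$4) (p$2) = - T3" "det3 (p$1) (p$4) (p$3) = - T2"
    "det3 (p$2) (p$3) (p$1) = T4" "det3 (p$2) (p$4) (p$1) = T3" "det3 (p$2) (p$4) (p$3) = - T1"
    "det3 (p$3) (p$4) (p$1) = T2" "det3 (p$3) (p$4) (p$2) = T1"
    unfolding T1_def T2_def T3_def T4_def det3_def by (simp_all add: algebra_simps)
  have u: "UNIV - {1,2} = {3,4::4}" "UNIV - {1,3} = {2,4::4}" "UNIV - {1,4} = {2,3::4}"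
     "UNIV - {2,3} = {1,4::4}" "UNIV - {2,4} = {1,3::4}" "UNIV - {3,4} = {1,2::4}"
    unfolding UNIV_4 by auto
  show "wgt p 1 2 = 1/(T4*T3)" "wgt p 1 3 = -1/(T4*T2)" "wgt p 1 4 = 1/(T3*T2)"
  "wgt p 2 3 = 1/(T4*T1)" "wgt p 2 4 = -1/(T3*T1)" "wgt p 3 4 = 1/(T2*T1)"
    unfolding wgt_def u by (simp_all add: e T3_def T4_def T1_def T2_def)
qed

lemma wsum: "(\<Sum>(i,j)\<in>pairs4. wgt p i j * e i j) =
   (e 1 2 * T1*T2 - e 1 3 * T1*T3 + e 1 4 * T1*T4 + e 2 3 * T2*T3 - e 2 4 * T2*T4 + e 3 4 * T3*T4)
   / (T1*T2*T3*T4)"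
  unfolding sum_pairs4 wgt_vals using Tnz by (simp add: field_simps)

lemma stress: "(\<Sum>(i,j)\<in>pairs4. wgt p i j * edge_val p v i j) = 0"
proof -
  have "edge_val p v 1 2 * T1*T2 - edge_val p v 1 3 * T1*T3 + edge_val p v 1 4 * T1*T4
     + edge_val p v 2 3 * T2*T3 - edge_val p v 2 4 * T2*T4 + edge_val p v 3 4 * T3*T4 = 0"
    unfolding ev T1_def T2_def T3_def T4_def det3_def by algebra
  then show ?thesis unfolding wsum by simp
qed

lemma wnz: "(k,l) \<in> pairs4 \<Longrightarrow> wgt p k l \<noteq> 0"
  unfolding pairs4_def using Tnz by (auto simp: wgt_vals)


lemma lin2: fixes al be ga de u w :: real
  assumes "al*u + be*w = 0" "ga*u + de*w = 0" "al*de - be*ga \<noteq> 0" shows "u = 0 \<and> w = 0"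
proof -
  have "u*(al*de - be*ga) = de*(al*u + be*w) - be*(ga*u + de*w)" by (simp add: algebra_simps)
  also have "\<dots> = 0" using assms by simp
  finally have 1: "u*(al*de - be*ga) = 0" .
  have "w*(al*de - be*ga) = al*(ga*u + de*w) - ga*(al*u + be*w)" by (simp add: algebra_simps)
  also have "\<dots> = 0" using assms by simp
  finally have 2: "w*(al*de - be*ga) = 0" .
  show ?thesis using 1 2 assms(3) by simp
qed

lemma cramer: fixes al be ga de r1 r2 D :: real
  assumes "D \<noteq> 0" "D = al*de - be*ga"
  shows "al*((r1*de - be*r2)/D) + be*((al*r2 - ga*r1)/D) = r1"
    "ga*((r1*de - be*r2)/D) + de*((al*r2 - ga*r1)/D) = r2"
proof -
  have "al*((r1*de - be*r2)/D) + be*((al*r2 - ga*r1)/D) = (al*(r1*de - be*r2) + be*(al*r2 - ga*r1))/D"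
    by (simp add: add_divide_distrib)
  also have "al*(r1*de - be*r2) + be*(al*r2 - ga*r1) = r1 * D" unfolding assms(2) by (simp add: algebra_simps)
  finally show "al*((r1*de - be*r2)/D) + be*((al*r2 - ga*r1)/D) = r1" using assms(1) by simp
  have "ga*((r1*de - be*r2)/D) + de*((al*r2 - ga*r1)/D) = (ga*(r1*de - be*r2) + de*(al*r2 - ga*r1))/D"
    by (simp add: add_divide_distrib)
  also have "ga*(r1*de - be*r2) + de*(al*r2 - ga*r1) = r2 * D" unfolding assms(2) by (simp add: algebra_simps)
  finally show "ga*((r1*de - be*r2)/D) + de*((al*r2 - ga*r1)/D) = r2" using assms(1) by simp
qed

lemma inj:
  assumes na: "normalized a" and nb: "normalized b" and y: "snd (p$1) \<noteq> snd (p$2)"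
    and eq: "\<forall>(i,j)\<in>pairs4. edge_val p a i j = edge_val p b i j"
  shows "a = b"
proof -
  have e: "edge_val p a 1 2 = edge_val p b 1 2" "edge_val p a 1 3 = edge_val p b 1 3"
    "edge_val p a 1 4 = edge_val p b 1 4" "edge_val p a 2 3 = edge_val p b 2 3"
    "edge_val p a 2 4 = edge_val p b 2 4"
    using eq unfolding pairs4_def by auto
  have z: "fst (a$1) = 0" "snd (a$1) = 0" "fst (a$2) = 0" "fst (b$1) = 0" "snd (b$1) = 0" "fst (b$2) = 0"
    using na nb unfolding normalized_def by auto
  have b2: "snd (a$2) = snd (b$2)" using e(1) y unfolding ev z by simp
  have "a$m = b$m" if m: "m = 3 \<or> m = 4" for m
  proof -
    have D: "(fst (p$1) - fst (p$m))*(snd (p$2) - snd (p$m)) - (snd (p$1) - snd (p$m))*(fst (p$2) - fst (p$m)) \<noteq> 0"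
      using m Tnz unfolding T4_def T3_def det3_def by (auto simp: algebra_simps)
    have e1: "edge_val p a 1 m = edge_val p b 1 m" and e2: "edge_val p a 2 m = edge_val p b 2 m"
      using m e by auto
    have "(fst (p$1) - fst (p$m))*(fst (a$m) - fst (b$m)) + (snd (p$1) - snd (p$m))*(snd (a$m) - snd (b$m)) = 0"
      using e1 unfolding ev z by (simp add: algebra_simps)
    moreover have "(fst (p$2) - fst (p$m))*(fst (a$m) - fst (b$m)) + (snd (p$2) - snd (p$m))*(snd (a$m) - snd (b$m)) = 0"
      using e2 b2 unfolding ev z by (simp add: algebra_simps)
    ultimately have "fst (a$m) - fst (b$m) = 0 \<and> snd (a$m) - snd (b$m) = 0"
      using lin2 D by blast
    then show ?thesis by (simp add: prod_eq_iff)
  qed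
  moreover have "a$1 = b$1" "a$2 = b$2" using z b2 by (simp_all add: prod_eq_iff)
  ultimately show ?thesis unfolding vec_eq_iff forall_4 by auto
qed


lemma exist:
  assumes y: "snd (p$1) \<noteq> snd (p$2)" and hs: "(\<Sum>(i,j)\<in>pairs4. wgt p i j * e i j) = 0"
  shows "\<exists>v. normalized v \<and> (\<forall>(i,j)\<in>pairs4. edge_val p v i j = e i j)"
proof -
  define x1 where "x1 = fst (p$1)" define x2 where "x2 = fst (p$2)"
  define x3 where "x3 = fst (p$3)" define x4 where "x4 = fst (p$4)"
  define y1 where "y1 = snd (p$1)" define y2 where "y2 = snd (p$2)"
  define y3 where "y3 = snd (p$3)" define y4 where "y4 = snd (p$4)"
  have T4e: "T4 = (x1-x3)*(y2-y3) - (y1-y3)*(x2-x3)"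
    unfolding T4_def det3_def x1_def x2_def x3_def y1_def y2_def y3_def by (simp add: algebra_simps)
  have T3e: "T3 = (x1-x4)*(y2-y4) - (y1-y4)*(x2-x4)"
    unfolding T3_def det3_def x1_def x2_def x4_def y1_def y2_def y4_def by (simp add: algebra_simps)
  have y12: "y1 - y2 \<noteq> 0" using y unfolding y1_def y2_def by simp
  define b2 where "b2 = - e 1 2 / (y1 - y2)"
  define r1 where "r1 = - e 1 3" define r2 where "r2 = (y2-y3)*b2 - e 2 3"
  define a3 where "a3 = (r1*(y2-y3) - (y1-y3)*r2)/T4"
  define b3 where "b3 = ((x1-x3)*r2 - (x2-x3)*r1)/T4"
  define g1 where "g1 = - e 1 4" define g2 where "g2 = (y2-y4)*b2 - e 2 4"
  define a4 where "a4 = (g1*(y2-y4) - (y1-y4)* g2)/T3"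
  define b4 where "b4 = ((x1-x4)* g2 - (x2-x4)* g1)/T3"
  define v :: "(real \<times> real)^4" where
    "v = (\<chi> i. if i = 1 then (0,0) else if i = 2 then (0,b2) else if i = 3 then (a3,b3) else (a4,b4))"
  have v: "v$1 = (0,0)" "v$2 = (0,b2)" "v$3 = (a3,b3)" "v$4 = (a4,b4)" unfolding v_def by simp_all
  have nv: "normalized v" unfolding normalized_def v by simp
  have E12: "edge_val p v 1 2 = e 1 2" unfolding ev v x1_def[symmetric] x2_def[symmetric] y1_def[symmetric] y2_def[symmetric]
    using y12 by (simp add: b2_def field_simps)
  have E13: "edge_val p v 1 3 = e 1 3"
  proof -
    have "edge_val p v 1 3 = -((x1-x3)*a3 + (y1-y3)*b3)"
      unfolding ev v x1_def[symmetric] x3_def[symmetric] y1_def[symmetric] y3_def[symmetric] by (simp add: algebra_simps)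
    also have "(x1-x3)*a3 + (y1-y3)*b3 = r1" unfolding a3_def b3_def by (rule cramer(1)[OF Tnz(4) T4e])
    finally show ?thesis by (simp add: r1_def)
  qed
  have E23: "edge_val p v 2 3 = e 2 3"
  proof -
    have "edge_val p v 2 3 = (y2-y3)*b2 - ((x2-x3)*a3 + (y2-y3)*b3)"
      unfolding ev v x2_def[symmetric] x3_def[symmetric] y2_def[symmetric] y3_def[symmetric] by (simp add: algebra_simps)
    also have "(x2-x3)*a3 + (y2-y3)*b3 = r2" unfolding a3_def b3_def by (rule cramer(2)[OF Tnz(4) T4e])
    finally show ?thesis by (simp add: r2_def)
  qed
  have E14: "edge_val p v 1 4 = e 1 4"
  proof -
    have "edge_val p v 1 4 = -((x1-x4)*a4 + (y1-y4)*b4)"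
      unfolding ev v x1_def[symmetric] x4_def[symmetric] y1_def[symmetric] y4_def[symmetric] by (simp add: algebra_simps)
    also have "(x1-x4)*a4 + (y1-y4)*b4 = g1" unfolding a4_def b4_def by (rule cramer(1)[OF Tnz(3) T3e])
    finally show ?thesis by (simp add: g1_def)
  qed
  have E24: "edge_val p v 2 4 = e 2 4"
  proof -
    have "edge_val p v 2 4 = (y2-y4)*b2 - ((x2-x4)*a4 + (y2-y4)*b4)"
      unfolding ev v x2_def[symmetric] x4_def[symmetric] y2_def[symmetric] y4_def[symmetric] by (simp add: algebra_simps)
    also have "(x2-x4)*a4 + (y2-y4)*b4 = g2" unfolding a4_def b4_def by (rule cramer(2)[OF Tnz(3) T3e])
    finally show ?thesis by (simp add: g2_def)
  qed
  have "wgt p 3 4 * edge_val p v 3 4 = wgt p 3 4 * e 3 4"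
    using stress[of v, unfolded sum_pairs4 E12 E13 E14 E23 E24] hs[unfolded sum_pairs4] by linarith
  then have E34: "edge_val p v 3 4 = e 3 4" using wnz[of 3 4] unfolding pairs4_def by simp
  show ?thesis using nv E12 E13 E14 E23 E24 E34 unfolding pairs4_def by auto
qed


end

lemma sum_split:
  assumes "(k,l) \<in> pairs4"
  shows "(\<Sum>(i,j)\<in>pairs4. g i j) = g k l + (\<Sum>(i,j)\<in>pairs4 - {(k,l)}. (g i j::real))"
proof -
  have "finite pairs4" unfolding pairs4_def by simp
  then show ?thesis using sum.remove[OF _ assms, of "\<lambda>(i,j). g i j"] by simp
qed

lemma sum_cong_rest:
  assumes "\<forall>(i,j)\<in>A. g i j = h i j"
  shows "(\<Sum>(i,j)\<in>A. g i j) = (\<Sum>(i,j)\<in>A. (h i j::real))"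
  using assms by (intro sum.cong) auto

theorem lemma3p8:
  fixes p :: "(real \<times> real)^4" and f :: "4 \<Rightarrow> 4 \<Rightarrow> real" and k l :: 4
  assumes "gen_pos p"
    and "snd (p$1) \<noteq> snd (p$2)"
    and "(k, l) \<in> pairs4"
  shows "((\<exists>v\<in>Xbar f p. Eset f p v = pairs4 - {(k, l)}) \<longleftrightarrow> Rsum f p * wgt p k l < 0)
       \<and> (\<forall>v\<in>Xbar f p. Eset f p v = pairs4 - {(k, l)} \<longrightarrow> v extreme_point_of Xbar f p)"
proof -
  note gp = assms(1) and y = assms(2) and kl = assms(3)
  define w where "w = wgt p k l"
  have wnz: "w \<noteq> 0" unfolding w_def using wnz[OF gp kl] .
  define Q where "Q = (\<Sum>(i,j)\<in>pairs4 - {(k,l)}. wgt p i j * f i j)"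
  have R: "Rsum f p = w * f k l + Q"
    unfolding Rsum_def Q_def w_def using sum_split[OF kl, of "\<lambda>i j. wgt p i j * f i j"] by simp
  have stress_split: "w * edge_val p v k l + (\<Sum>(i,j)\<in>pairs4 - {(k,l)}. wgt p i j * edge_val p v i j) = 0" for v
    using stress[OF gp, of v] sum_split[OF kl, of "\<lambda>i j. wgt p i j * edge_val p v i j"] unfolding w_def by simp
  have Eiff: "Eset f p v = pairs4 - {(k,l)} \<longleftrightarrow>
     (\<forall>(i,j)\<in>pairs4 - {(k,l)}. edge_val p v i j = f i j) \<and> edge_val p v k l \<noteq> f k l" for v
    unfolding Eset_def using kl by auto
  have part1: "(\<exists>v\<in>Xbar f p. Eset f p v = pairs4 - {(k, l)}) \<longleftrightarrow> Rsum f p * w < 0"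
  proof
    assume "\<exists>v\<in>Xbar f p. Eset f p v = pairs4 - {(k, l)}"
    then obtain v where vX: "v \<in> Xbar f p" and vE: "Eset f p v = pairs4 - {(k, l)}" by blast
    have rest: "\<forall>(i,j)\<in>pairs4 - {(k,l)}. edge_val p v i j = f i j" and ne: "edge_val p v k l \<noteq> f k l"
      using vE Eiff by auto
    have ge: "edge_val p v k l \<ge> f k l" using vX kl unfolding Xbar_def by auto
    have "(\<Sum>(i,j)\<in>pairs4 - {(k,l)}. wgt p i j * edge_val p v i j) = Q"
      unfolding Q_def using rest by (intro sum_cong_rest) auto
    then have "Rsum f p = - w * (edge_val p v k l - f k l)" using stress_split[of v] R by (simp add: algebra_simps)
    then have "Rsum f p * w = - (w*w) * (edge_val p v k l - f k l)" by simp
    moreover have "w*w > 0" using wnz not_real_square_gt_zero by blast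
    moreover have "edge_val p v k l - f k l > 0" using ge ne by simp
    ultimately show "Rsum f p * w < 0" by (simp add: mult_pos_pos)
  next
    assume neg: "Rsum f p * w < 0"
    define d where "d = - Rsum f p / w"
    have dpos: "d > 0"
    proof -
      have h: "Rsum f p / w = (Rsum f p * w)/(w*w)" using wnz by simp
      have ww: "w*w > 0" using wnz not_real_square_gt_zero by blast
      have "(Rsum f p * w)/(w*w) < 0" by (rule divide_neg_pos[OF neg ww])
      then show ?thesis unfolding d_def h using wnz by simp
    qed
    define e where "e = (\<lambda>i j. if (i,j) = (k,l) then f k l + d else f i j)"
    have "(\<Sum>(i,j)\<in>pairs4. wgt p i j * e i j) = w * (f k l + d) + Q"
    proof -
      have "(\<Sum>(i,j)\<in>pairs4 - {(k,l)}. wgt p i j * e i j) = Q"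
        unfolding Q_def e_def by (intro sum_cong_rest) auto
      then show ?thesis using sum_split[OF kl, of "\<lambda>i j. wgt p i j * e i j"] unfolding w_def e_def by simp
    qed
    also have "\<dots> = 0" unfolding d_def using R wnz by (simp add: field_simps)
    finally obtain v where nv: "normalized v" and ve: "\<forall>(i,j)\<in>pairs4. edge_val p v i j = e i j"
      using exist[OF gp y] by blast
    have "v \<in> Xbar f p" unfolding Xbar_def using nv ve dpos by (auto simp: e_def)
    moreover have "Eset f p v = pairs4 - {(k,l)}" unfolding Eset_def using ve dpos kl by (auto simp: e_def)
    ultimately show "\<exists>v\<in>Xbar f p. Eset f p v = pairs4 - {(k, l)}" by blast
  qed
  have part2: "v extreme_point_of Xbar f p" if vX: "v \<in> Xbar f p" and vE: "Eset f p v = pairs4 - {(k, l)}" for v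
  proof -
    have rest: "\<forall>(i,j)\<in>pairs4 - {(k,l)}. edge_val p v i j = f i j"
      using vE Eiff by auto
    have "v \<notin> open_segment a b" if aX: "a \<in> Xbar f p" and bX: "b \<in> Xbar f p" for a b
    proof
      assume "v \<in> open_segment a b"
      then obtain u where ab: "a \<noteq> b" and u: "0 < u" "u < 1" and vu: "v = (1 - u) *\<^sub>R a + u *\<^sub>R b"
        unfolding in_segment by blast
      have aa: "\<forall>(i,j)\<in>pairs4. edge_val p a i j \<ge> f i j" and bb: "\<forall>(i,j)\<in>pairs4. edge_val p b i j \<ge> f i j"
        using aX bX unfolding Xbar_def by auto
      have req1: "edge_val p a i j = edge_val p b i j" if mem: "(i,j) \<in> pairs4 - {(k,l)}" for i j
      proof -
        have ij: "(i,j) \<in> pairs4" using mem by simp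
        have "edge_val p v i j = f i j" using rest mem by auto
        then have "f i j = (1-u) * edge_val p a i j + u * edge_val p b i j"
          unfolding vu ev_lin by simp
        moreover have "edge_val p a i j \<ge> f i j" "edge_val p b i j \<ge> f i j" using aa bb ij by auto
        ultimately have s0: "(1-u)*(edge_val p a i j - f i j) + u*(edge_val p b i j - f i j) = 0"
          and g1: "edge_val p a i j - f i j \<ge> 0" and g2: "edge_val p b i j - f i j \<ge> 0"
          by (simp_all add: algebra_simps)
        have "(1-u)*(edge_val p a i j - f i j) \<ge> 0" "u*(edge_val p b i j - f i j) \<ge> 0"
          using g1 g2 u by simp_all
        then have "(1-u)*(edge_val p a i j - f i j) = 0" "u*(edge_val p b i j - f i j) = 0"
          using s0 by linarith+
        then have "edge_val p a i j = f i j \<and> edge_val p b i j = f i j" using u by simp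
        then show "edge_val p a i j = edge_val p b i j" by simp
      qed
      have req: "\<forall>(i,j)\<in>pairs4 - {(k,l)}. edge_val p a i j = edge_val p b i j"
        using req1 by auto
      have "(\<Sum>(i,j)\<in>pairs4 - {(k,l)}. wgt p i j * edge_val p a i j) = (\<Sum>(i,j)\<in>pairs4 - {(k,l)}. wgt p i j * edge_val p b i j)"
        using req by (intro sum_cong_rest) auto
      then have "w * edge_val p a k l = w * edge_val p b k l" using stress_split[of a] stress_split[of b] by linarith
      then have "edge_val p a k l = edge_val p b k l" using wnz by simp
      then have "\<forall>(i,j)\<in>pairs4. edge_val p a i j = edge_val p b i j" using req by auto
      moreover have "normalized a" "normalized b" using aX bX unfolding Xbar_def by auto
      ultimately have "a = b" using inj[OF gp] y by blast
      then show False using ab by simp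
    qed
    then show ?thesis unfolding extreme_point_of_def using vX by blast
  qed
  show ?thesis using part1 part2 unfolding w_def by blast
qed

end
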